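(* Let $m\ge2$ and $t\ge1$ be integers, and let $f$ be the two-digit base-$m$ Kaprekar map on $X=\{0,\dots,m^2-1\}$. There exists $x\in X$ with $K(x)\neq\{0\}$ and $T(x)=t$ if and only if there exists an integer $d>1$ with $d\mid m+1$ such that $t$ is the least positive integer satisfying $d\mid 2^t+1$ or $d\mid 2^t-1$.
   Context: For an integer $m\ge2$, $X=\{0,1,\dots,m^2-1\}$, each element written with exactly two base-$m$ digits (leading zeros allowed); $f(x)=D(x)-A(x)$ where $D(x)$ (resp. $A(x)$) has the digits of $x$ in nonincreasing (resp. nondecreasing) order. The step $S(x)$ is the least $s\ge0$ such that $f^{s+t}(x)=f^s(x)$ for some $t\ge1$; the minimal period $T(x)$ is the least $t\ge1$ with $f^{S(x)+t}(x)=f^{S(x)}(x)$; the fixed set of $x$ is $K(x)=\{f^{S(x)+i}(x):0\le i<T(x)\}$. *)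

theory Defs
  imports Main
begin

definition kapD :: "nat \<Rightarrow> nat \<Rightarrow> nat" where
  "kapD m x = max (x div m) (x mod m) * m + min (x div m) (x mod m)"

definition kapA :: "nat \<Rightarrow> nat \<Rightarrow> nat" where
  "kapA m x = min (x div m) (x mod m) * m + max (x div m) (x mod m)"

definition kap :: "nat \<Rightarrow> nat \<Rightarrow> nat" where
  "kap m x = kapD m x - kapA m x"

definition kstep :: "nat \<Rightarrow> nat \<Rightarrow> nat" where
  "kstep m x = (LEAST s. \<exists>t\<ge>1. (kap m ^^ (s + t)) x = (kap m ^^ s) x)"

definition kperiod :: "nat \<Rightarrow> nat \<Rightarrow> nat" where
  "kperiod m x = (LEAST t. t \<ge> 1 \<and> (kap m ^^ (kstep m x + t)) x = (kap m ^^ kstep m x) x)"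

definition kfixed :: "nat \<Rightarrow> nat \<Rightarrow> nat set" where
  "kfixed m x = {(kap m ^^ (kstep m x + i)) x | i. i < kperiod m x}"

end

theory Submission
  imports Defs
begin


lemma pigeon_iter:
  assumes cl: "\<And>y. y \<in> A \<Longrightarrow> f y \<in> A" and fin: "finite A" and x: "x \<in> A"
  shows "\<exists>s t. t \<ge> 1 \<and> (f^^(s+t)) x = (f^^s) x"
proof -
  have it: "(f^^i) x \<in> A" for i by (induction i) (auto simp: x cl)
  have "\<not> inj_on (\<lambda>i. (f^^i) x) {..card A}"
  proof
    assume inj: "inj_on (\<lambda>i. (f^^i) x) {..card A}"
    have "(\<lambda>i. (f^^i) x) ` {..card A} \<subseteq> A" using it by auto
    then have "card {..card A} \<le> card A" using card_inj_on_le[OF inj _ fin] by blast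
    then show False by simp
  qed
  then obtain i j where ij: "i \<noteq> j" "(f^^i) x = (f^^j) x" unfolding inj_on_def by blast
  show ?thesis
  proof (cases "i < j")
    case True then show ?thesis using ij by (intro exI[of _ i] exI[of _ "j - i"]) auto
  next
    case False then have "j < i" using ij by simp
    then show ?thesis using ij by (intro exI[of _ j] exI[of _ "i - j"]) auto
  qed
qed

lemma dvd_mult_gcd:
  fixes n c k :: nat
  assumes n: "n > 0"
  shows "(n dvd c*k) \<longleftrightarrow> (n div gcd k n dvd c)"
proof -
  define g where "g = gcd k n"
  have g: "g > 0" using n unfolding g_def by simp
  define a where "a = n div g"
  define b where "b = k div g"
  have na: "n = g*a" unfolding a_def g_def by simp
  have kb: "k = g*b" unfolding b_def g_def by simp
  have cop: "coprime a b" unfolding a_def b_def g_def using n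
    by (metis div_gcd_coprime gcd.commute coprime_commute bot_nat_0.not_eq_extremum gcd_eq_0_iff)
  have "(n dvd c*k) \<longleftrightarrow> (g*a dvd g*(c*b))" unfolding na kb by (simp add: ac_simps)
  also have "\<dots> \<longleftrightarrow> a dvd c*b" using g by simp
  also have "\<dots> \<longleftrightarrow> a dvd c" using cop by (simp add: coprime_dvd_mult_left_iff)
  finally show ?thesis unfolding a_def g_def .
qed



definition gk :: "nat \<Rightarrow> nat \<Rightarrow> nat" where
  "gk m k = (if k = 0 then 0 else if m + 1 \<le> 2*k then 2*k - (m+1) else m + 1 - 2*k)"

definition dif :: "nat \<Rightarrow> nat \<Rightarrow> nat" where
  "dif m x = max (x div m) (x mod m) - min (x div m) (x mod m)"

lemma kap_eq: "kap m x = dif m x * (m - 1)"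
proof -
  define a where "a = max (x div m) (x mod m)"
  define b where "b = min (x div m) (x mod m)"
  have ab: "b \<le> a" unfolding a_def b_def by simp
  have "kap m x = (a*m + b) - (b*m + a)" unfolding kap_def kapD_def kapA_def a_def b_def by simp
  also have "\<dots> = (a - b) * (m - 1)"
  proof -
    have "int ((a*m + b) - (b*m + a)) = int ((a - b) * (m - 1))"
    proof (cases "m = 0")
      case True then show ?thesis using ab by simp
    next
      case False
      obtain c where c: "a = b + c" using ab le_Suc_ex by blast
      have "c \<le> c * m" using False by simp
      then have "b*m + a \<le> a*m + b" unfolding c by (simp add: algebra_simps)
      then show ?thesis using ab False by (simp add: of_nat_diff algebra_simps)
    qed
    then show ?thesis by linarith
  qed
  finally show ?thesis unfolding dif_def a_def b_def by simp
qed

lemma dif_le: assumes "x < m^2" shows "dif m x \<le> m - 1"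
proof -
  have m: "m > 0" using assms by (cases m) auto
  have "x div m < m" using assms m by (simp add: power2_eq_square div_less_iff_less_mult)
  moreover have "x mod m < m" using m by simp
  ultimately show ?thesis unfolding dif_def by linarith
qed

lemma kap_mult:
  assumes m: "m \<ge> 2" and k: "1 \<le> k" "k \<le> m - 1"
  shows "kap m (k*(m-1)) = gk m k * (m-1)"
proof -
  have e: "k*(m-1) = (m-k) + (k-1)*m" using m k
    by (simp add: algebra_simps diff_mult_distrib2 diff_mult_distrib)
  have lt: "m - k < m" using k m by simp
  have dv: "k*(m-1) div m = k - 1" unfolding e using lt m by simp
  have md: "k*(m-1) mod m = m - k" unfolding e using lt m by simp
  show ?thesis unfolding kap_eq dif_def dv md gk_def using k m by auto
qed

lemma gk_le: assumes "k \<le> m - 1" shows "gk m k \<le> m - 1"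
  using assms unfolding gk_def by auto

lemma kap0: "kap m 0 = 0" unfolding kap_def kapD_def kapA_def by simp

lemma kap_iter:
  assumes m: "m \<ge> 2" and k: "k \<le> m - 1"
  shows "(kap m ^^ i) (k*(m-1)) = (gk m ^^ i) k * (m-1) \<and> (gk m ^^ i) k \<le> m - 1"
proof (induction i)
  case 0 then show ?case using k by simp
next
  case (Suc i)
  define j where "j = (gk m ^^ i) k"
  have j: "j \<le> m - 1" "(kap m ^^ i) (k*(m-1)) = j * (m-1)" using Suc unfolding j_def by auto
  show ?case
  proof (cases "j = 0")
    case True
    have g0: "gk m 0 = 0" by (simp add: gk_def)
    show ?thesis using True j by (simp add: j_def[symmetric] kap0 g0)
  next
    case False
    then show ?thesis using j kap_mult[OF m, of j] gk_le[of j m] by (simp add: j_def[symmetric])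
  qed
qed

lemma gk_cong: "int (m+1) dvd (int (gk m k) - 2 * int k) \<or> int (m+1) dvd (int (gk m k) + 2 * int k)"
proof (cases "k = 0")
  case True then show ?thesis by (simp add: gk_def)
next
  case False
  show ?thesis
  proof (cases "m + 1 \<le> 2*k")
    case True
    then have "int (gk m k) - 2 * int k = - int (m+1)" using False by (simp add: gk_def of_nat_diff)
    then show ?thesis by (metis dvd_minus_iff dvd_refl)
  next
    case c: False
    then have "int (gk m k) + 2 * int k = int (m+1)" using False by (simp add: gk_def of_nat_diff)
    then show ?thesis by (metis dvd_refl)
  qed
qed

lemma gk_iter_cong:
  "int (m+1) dvd (int ((gk m ^^ i) k) - 2^i * int k) \<or> int (m+1) dvd (int ((gk m ^^ i) k) + 2^i * int k)"
proof (induction i)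
  case 0 then show ?case by simp
next
  case (Suc i)
  define y where "y = (gk m ^^ i) k"
  define n where "n = int (m+1)"
  have IH: "n dvd (int y - 2^i * int k) \<or> n dvd (int y + 2^i * int k)" using Suc unfolding y_def n_def .
  have G: "n dvd (int (gk m y) - 2 * int y) \<or> n dvd (int (gk m y) + 2 * int y)" using gk_cong unfolding n_def .
  have e1: "int (gk m y) - 2^Suc i * int k = (int (gk m y) - 2 * int y) + 2 * (int y - 2^i * int k)" by simp
  have e2: "int (gk m y) + 2^Suc i * int k = (int (gk m y) - 2 * int y) + 2 * (int y + 2^i * int k)" by simp
  have e3: "int (gk m y) + 2^Suc i * int k = (int (gk m y) + 2 * int y) - 2 * (int y - 2^i * int k)" by simp
  have e4: "int (gk m y) - 2^Suc i * int k = (int (gk m y) + 2 * int y) - 2 * (int y + 2^i * int k)" by simp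
  have "n dvd (int (gk m y) - 2^Suc i * int k) \<or> n dvd (int (gk m y) + 2^Suc i * int k)"
    using IH G e1 e2 e3 e4 by (metis dvd_add dvd_diff dvd_mult)
  then show ?case unfolding y_def n_def by simp
qed

lemma gk_sym: assumes "1 \<le> k" "k \<le> m - 1" "m \<ge> 2" shows "gk m (m + 1 - k) = gk m k"
  using assms unfolding gk_def by auto

lemma key:
  assumes m: "m \<ge> 2" and k: "1 \<le> k" "k \<le> m - 1" and p: "p \<ge> 1" "(gk m ^^ p) k = k"
  shows "(gk m ^^ t) k = k \<longleftrightarrow> ((m+1) dvd (2^t-1)*k \<or> (m+1) dvd (2^t+1)*k)"
proof -
  define y where "y = (gk m ^^ t) k"
  define n where "n = int (m+1)"
  have yle: "y \<le> m - 1" unfolding y_def using kap_iter[OF m k(2)] by blast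
  have C: "n dvd (int y - 2^t * int k) \<or> n dvd (int y + 2^t * int k)" unfolding n_def y_def by (rule gk_iter_cong)
  have p1: "(2::nat)^t \<ge> 1" by simp
  have e1: "int ((2^t-1)*k) = 2^t * int k - int k" using p1 by (simp add: of_nat_diff algebra_simps)
  have e2: "int ((2^t+1)*k) = 2^t * int k + int k" by (simp add: algebra_simps)
  have D: "((m+1) dvd (2^t-1)*k \<or> (m+1) dvd (2^t+1)*k) \<longleftrightarrow>
      (n dvd (2^t * int k - int k) \<or> n dvd (2^t * int k + int k))"
    unfolding n_def e1[symmetric] e2[symmetric] by (simp only: int_dvd_int_iff)
  show ?thesis
  proof
    assume "(gk m ^^ t) k = k"
    then have "y = k" unfolding y_def .
    then have "n dvd (int k - 2^t * int k) \<or> n dvd (int k + 2^t * int k)" using C by simp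
    then have "n dvd (2^t * int k - int k) \<or> n dvd (2^t * int k + int k)"
      by (metis add.commute dvd_minus_iff minus_diff_eq)
    then show "(m+1) dvd (2^t-1)*k \<or> (m+1) dvd (2^t+1)*k" using D by blast
  next
    assume "(m+1) dvd (2^t-1)*k \<or> (m+1) dvd (2^t+1)*k"
    then have H: "n dvd (2^t * int k - int k) \<or> n dvd (2^t * int k + int k)" using D by blast
    have f1: "int y - int k = (int y - 2^t * int k) + (2^t * int k - int k)" by simp
    have f2: "int y + int k = (int y - 2^t * int k) + (2^t * int k + int k)" by simp
    have f3: "int y + int k = (int y + 2^t * int k) - (2^t * int k - int k)" by simp
    have f4: "int y - int k = (int y + 2^t * int k) - (2^t * int k + int k)" by simp
    have "n dvd (int y - int k) \<or> n dvd (int y + int k)"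
      using C H f1 f2 f3 f4 by (metis dvd_add dvd_diff)
    then show "(gk m ^^ t) k = k"
    proof
      assume a: "n dvd (int y - int k)"
      show ?thesis
      proof (rule ccontr)
        assume "(gk m ^^ t) k \<noteq> k"
        then have "int y - int k \<noteq> 0" unfolding y_def by simp
        from dvd_imp_le_int[OF this a] have "\<bar>n\<bar> \<le> \<bar>int y - int k\<bar>" .
        then show False using yle k m unfolding n_def by linarith
      qed
    next
      assume a: "n dvd (int y + int k)"
      have yk: "y = m + 1 - k"
      proof (rule ccontr)
        assume "y \<noteq> m + 1 - k"
        then have ne: "int y + int k - n \<noteq> 0" unfolding n_def using k m by linarith
        have "n dvd (int y + int k - n)" using a by simp
        from dvd_imp_le_int[OF ne this] have "\<bar>n\<bar> \<le> \<bar>int y + int k - n\<bar>" .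
        then show False using yle k m unfolding n_def by linarith
      qed
      have gy: "gk m y = gk m k" unfolding yk using gk_sym[OF k m] .
      have "(gk m ^^ (t + p)) k = (gk m ^^ t) ((gk m ^^ p) k)" by (simp add: funpow_add)
      also have "\<dots> = y" unfolding p(2) y_def ..
      finally have A: "(gk m ^^ (t + p)) k = y" .
      have tp: "t + p = (p - 1) + Suc t" using p by simp
      have "(gk m ^^ (t + p)) k = (gk m ^^ ((p - 1) + Suc t)) k" unfolding tp ..
      also have "\<dots> = (gk m ^^ (p - 1)) ((gk m ^^ Suc t) k)" by (simp only: funpow_add comp_apply)
      also have "\<dots> = (gk m ^^ (p - 1)) (gk m ((gk m ^^ t) k))" by simp
      also have "\<dots> = (gk m ^^ (p - 1)) (gk m k)" using gy unfolding y_def by simp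
      also have "\<dots> = (gk m ^^ ((p - 1) + 1)) k" by (simp only: funpow_add comp_apply funpow_swap1 funpow.simps(1) id_apply One_nat_def funpow.simps(2))
      also have "\<dots> = k" using p by simp
      finally show ?thesis using A unfolding y_def by simp
    qed
  qed
qed


lemma kap_lt: assumes "m \<ge> 2" "y < m^2" shows "kap m y < m^2"
proof -
  have "kap m y \<le> (m-1)*(m-1)" unfolding kap_eq using dif_le[OF assms(2)] by simp
  also have "\<dots> < m^2" using assms(1) by (simp add: power2_eq_square mult_strict_mono)
  finally show ?thesis .
qed

lemma kap_iter_lt: assumes "m \<ge> 2" "x < m^2" shows "(kap m ^^ i) x < m^2"
  by (induction i) (auto simp: assms kap_lt)

lemma kap0_iter: "(kap m ^^ i) 0 = 0"
  by (induction i) (auto simp: kap0)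

lemma orbit_facts:
  assumes m: "m \<ge> 2" and x: "x < m^2"
  shows "kperiod m x \<ge> 1 \<and> (kap m ^^ (kstep m x + kperiod m x)) x = (kap m ^^ kstep m x) x
     \<and> (\<forall>t. t \<ge> 1 \<and> (kap m ^^ (kstep m x + t)) x = (kap m ^^ kstep m x) x \<longrightarrow> kperiod m x \<le> t)"
proof -
  have "\<exists>s t. t \<ge> 1 \<and> (kap m^^(s+t)) x = (kap m^^s) x"
    by (rule pigeon_iter[of "{..<m^2}"]) (auto simp: x kap_lt[OF m])
  then have "\<exists>t\<ge>1. (kap m ^^ (kstep m x + t)) x = (kap m ^^ kstep m x) x"
    unfolding kstep_def by (rule LeastI_ex)
  then have E: "\<exists>t. t \<ge> 1 \<and> (kap m ^^ (kstep m x + t)) x = (kap m ^^ kstep m x) x" by blast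
  show ?thesis
    using LeastI_ex[OF E] Least_le[where P="\<lambda>t. t \<ge> 1 \<and> (kap m ^^ (kstep m x + t)) x = (kap m ^^ kstep m x) x"]
    unfolding kperiod_def by blast
qed

lemma odd_pow: assumes "t \<ge> 1" shows "odd ((2::nat)^t + 1)" "odd ((2::nat)^t - 1)"
proof -
  have e: "even ((2::nat)^t)" using assms by simp
  then show "odd ((2::nat)^t + 1)" by simp
  have "(2::nat)^t \<ge> 1" by simp
  then show "odd ((2::nat)^t - 1)" using e by (simp add: dvd_diff_nat)
qed

theorem theorem3p3p3:
  fixes m t :: nat
  assumes "m \<ge> 2" and "t \<ge> 1"
  shows "(\<exists>x < m^2. kfixed m x \<noteq> {0} \<and> kperiod m x = t) \<longleftrightarrow>
    (\<exists>d::nat. d > 1 \<and> d dvd m + 1 \<and>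
       (d dvd 2^t + 1 \<or> d dvd 2^t - 1) \<and>
       (\<forall>t'. 0 < t' \<and> t' < t \<longrightarrow> \<not> (d dvd 2^t' + 1 \<or> d dvd 2^t' - 1)))"
proof
  note m = assms(1)
  assume "\<exists>x < m^2. kfixed m x \<noteq> {0} \<and> kperiod m x = t"
  then obtain x where x: "x < m^2" "kfixed m x \<noteq> {0}" "kperiod m x = t" by blast
  define S where "S = kstep m x"
  define y where "y = (kap m ^^ S) x"
  have Si: "(kap m ^^ (S + i)) x = (kap m ^^ i) y" for i
    unfolding y_def by (simp add: add.commute[of S] funpow_add)
  note OF = orbit_facts[OF m x(1), folded S_def, unfolded x(3) Si, folded y_def]
  have per: "(kap m ^^ t) y = y" and minl: "\<And>t'. t' \<ge> 1 \<Longrightarrow> (kap m ^^ t') y = y \<Longrightarrow> t \<le> t'"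
    using OF by auto
  have y0: "y \<noteq> 0"
  proof
    assume "y = 0"
    then have "kfixed m x = {0}" unfolding kfixed_def x(3) S_def[symmetric] Si using assms(2)
      by (auto simp: kap0_iter intro: exI[of _ 0])
    then show False using x(2) by simp
  qed
  define z where "z = (kap m ^^ (t - 1)) y"
  have yz: "y = kap m z"
  proof -
    have "y = (kap m ^^ (Suc (t - 1))) y" using per assms(2) by simp
    then show ?thesis unfolding z_def by simp
  qed
  have ylt: "y < m^2" unfolding y_def using kap_iter_lt[OF m x(1)] .
  have zlt: "z < m^2" unfolding z_def using kap_iter_lt[OF m ylt] .
  define k where "k = dif m z"
  have kle: "k \<le> m - 1" unfolding k_def using dif_le[OF zlt] .
  have yk: "y = k * (m - 1)" unfolding yz k_def kap_eq ..
  have k1: "k \<ge> 1" using y0 yk by (cases k) auto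
  have m1: "m - 1 > 0" using m by simp
  have orb: "(kap m ^^ i) y = (gk m ^^ i) k * (m-1)" for i
    unfolding yk using kap_iter[OF m kle] by blast
  have eqv: "(kap m ^^ i) y = y \<longleftrightarrow> (gk m ^^ i) k = k" for i
    unfolding orb using m1 by (simp add: yk)
  have gper: "(gk m ^^ t) k = k" using per eqv by blast
  note K = key[OF m k1 kle assms(2) gper]
  define d where "d = (m+1) div gcd k (m+1)"
  have Dd: "(m+1) dvd c * k \<longleftrightarrow> d dvd c" for c unfolding d_def by (rule dvd_mult_gcd) simp
  have KD: "(gk m ^^ i) k = k \<longleftrightarrow> (d dvd 2^i - 1 \<or> d dvd 2^i + 1)" for i
    using K[of i] Dd by blast
  show "\<exists>d::nat. d > 1 \<and> d dvd m + 1 \<and>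
       (d dvd 2^t + 1 \<or> d dvd 2^t - 1) \<and>
       (\<forall>t'. 0 < t' \<and> t' < t \<longrightarrow> \<not> (d dvd 2^t' + 1 \<or> d dvd 2^t' - 1))"
  proof (intro exI[of _ d] conjI allI impI)
    have "d dvd m + 1" unfolding d_def by (metis dvd_div_mult_self dvd_triv_left gcd_dvd2)
    then show "d dvd m + 1" .
    show "d > 1"
    proof (rule ccontr)
      assume "\<not> d > 1"
      moreover have "d \<noteq> 0" using \<open>d dvd m + 1\<close> by (metis dvd_0_left_iff add_is_0 one_neq_zero)
      ultimately have "d dvd 1" by simp
      then have "(m+1) dvd 1 * k" using Dd by blast
      then show False using k1 kle m by (auto dest: dvd_imp_le)
    qed
    show "d dvd 2 ^ t + 1 \<or> d dvd 2 ^ t - 1" using KD[of t] gper by blast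
  next
    fix t' assume "0 < t' \<and> t' < t"
    then show "\<not> (d dvd 2 ^ t' + 1 \<or> d dvd 2 ^ t' - 1)"
      using KD[of t'] eqv[of t'] minl[of t'] by auto
  qed
next
  note m = assms(1)
  assume "\<exists>d::nat. d > 1 \<and> d dvd m + 1 \<and>
       (d dvd 2^t + 1 \<or> d dvd 2^t - 1) \<and>
       (\<forall>t'. 0 < t' \<and> t' < t \<longrightarrow> \<not> (d dvd 2^t' + 1 \<or> d dvd 2^t' - 1))"
  then obtain d where d1: "d > 1" and dn: "d dvd m + 1" and dt: "d dvd 2^t + 1 \<or> d dvd 2^t - 1"
    and dmin: "\<And>t'. 0 < t' \<Longrightarrow> t' < t \<Longrightarrow> \<not> (d dvd 2^t' + 1 \<or> d dvd 2^t' - 1)" by blast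
  have dodd: "odd d"
  proof
    assume "even d"
    then have "even ((2::nat)^t + 1) \<or> even ((2::nat)^t - 1)" using dt dvd_trans by blast
    then show False using odd_pow[OF assms(2)] by blast
  qed
  define k0 where "k0 = (m+1) div d"
  have nk0: "m + 1 = d * k0" unfolding k0_def using dn by simp
  have k01: "k0 \<ge> 1" using nk0 by (cases k0) auto
  have d3: "d \<ge> 3" using d1 dodd by (cases "d = 2") auto
  have "3 * k0 \<le> d * k0" using d3 by simp
  then have k0le: "k0 \<le> m - 1" using nk0 m by linarith
  have "\<exists>s p. p \<ge> 1 \<and> (gk m^^(s+p)) k0 = (gk m^^s) k0"
    by (rule pigeon_iter[of "{..m-1}"]) (use k0le gk_le in auto)
  then obtain s p where p1: "p \<ge> 1" and sp: "(gk m^^(s+p)) k0 = (gk m^^s) k0" by blast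
  define k where "k = (gk m ^^ s) k0"
  have kle: "k \<le> m - 1" unfolding k_def using kap_iter[OF m k0le] by blast
  have kper: "(gk m ^^ p) k = k" using sp unfolding k_def by (simp add: add.commute[of s] funpow_add)
  have Q: "(m+1) dvd c * k \<longleftrightarrow> d dvd c" for c
  proof -
    define n where "n = int (m+1)"
    have C: "n dvd (int k - 2^s * int k0) \<or> n dvd (int k + 2^s * int k0)"
      unfolding n_def k_def by (rule gk_iter_cong)
    have "n dvd int c * int k \<longleftrightarrow> n dvd int c * (2^s * int k0)"
    proof -
      have a1: "int c * int k = int c * (2^s * int k0) + int c * (int k - 2^s * int k0)"
        by (simp add: algebra_simps)
      have a2: "int c * int k = - (int c * (2^s * int k0)) + int c * (int k + 2^s * int k0)"
        by (simp add: algebra_simps)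
      from C show ?thesis
      proof
        assume h: "n dvd (int k - 2^s * int k0)"
        then have "n dvd int c * (int k - 2^s * int k0)" by simp
        then show ?thesis unfolding a1 using dvd_add_left_iff by blast
      next
        assume h: "n dvd (int k + 2^s * int k0)"
        then have "n dvd int c * (int k + 2^s * int k0)" by simp
        then show ?thesis unfolding a2 using dvd_add_left_iff dvd_minus_iff by blast
      qed
    qed
    then have "int (m+1) dvd int (c * k) \<longleftrightarrow> int (m+1) dvd int (c * 2^s * k0)"
      unfolding n_def by (simp add: ac_simps)
    then have "(m+1) dvd c * k \<longleftrightarrow> (m+1) dvd c * 2^s * k0"
      by (simp only: int_dvd_int_iff)
    also have "\<dots> \<longleftrightarrow> d dvd c * 2^s" unfolding nk0 using k01 by (simp add: mult.commute[of d])
    also have "\<dots> \<longleftrightarrow> d dvd c" using dodd by (simp add: coprime_dvd_mult_left_iff)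
    finally show ?thesis .
  qed
  have k1: "k \<ge> 1"
  proof (rule ccontr)
    assume "\<not> k \<ge> 1" then have "k = 0" by simp
    then have "d dvd 1" using Q[of 1] by simp
    then show False using d1 by simp
  qed
  have KD: "(gk m ^^ i) k = k \<longleftrightarrow> (d dvd 2^i - 1 \<or> d dvd 2^i + 1)" for i
    using key[OF m k1 kle p1 kper, of i] Q by blast
  define x where "x = k * (m - 1)"
  have m1: "m - 1 > 0" using m by simp
  have orb: "(kap m ^^ i) x = (gk m ^^ i) k * (m-1)" for i
    unfolding x_def using kap_iter[OF m kle] by blast
  have eqv: "(kap m ^^ i) x = x \<longleftrightarrow> (gk m ^^ i) k = k" for i
    unfolding orb using m1 by (simp add: x_def)
  have xlt: "x < m^2"
  proof -
    have "x \<le> (m-1)*(m-1)" unfolding x_def using kle by simp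
    also have "\<dots> < m^2" using m by (simp add: power2_eq_square mult_strict_mono)
    finally show ?thesis .
  qed
  have S0: "kstep m x = 0" unfolding kstep_def
    by (rule Least_eq_0) (use p1 kper eqv in auto)
  have T: "kperiod m x = t" unfolding kperiod_def S0
  proof (rule Least_equality)
    show "1 \<le> t \<and> (kap m ^^ (0 + t)) x = (kap m ^^ 0) x" using assms(2) eqv KD dt by auto
  next
    fix t'' assume h: "1 \<le> t'' \<and> (kap m ^^ (0 + t'')) x = (kap m ^^ 0) x"
    show "t \<le> t''"
    proof (rule ccontr)
      assume "\<not> t \<le> t''"
      then show False using h eqv[of t''] KD[of t''] dmin[of t''] by auto
    qed
  qed
  have "x \<in> kfixed m x" unfolding kfixed_def S0 T using assms(2)
    by (intro CollectI exI[of _ 0]) simp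
  moreover have "x \<noteq> 0" unfolding x_def using k1 m1 by simp
  ultimately have "kfixed m x \<noteq> {0}" by (metis singletonD)
  then show "\<exists>x < m^2. kfixed m x \<noteq> {0} \<and> kperiod m x = t" using xlt T by blast
qed

end
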